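(* Let $(X_t)_{t\ge1}$ be a Markov chain on $[K^*]$ (with arbitrary initial distribution) whose transition matrix $Q^*$ has all entries $\ge\sigma_-$, where $\sigma_-\in(0,1)$. Let $\delta>0$. Then almost surely $$\liminf_{n\to\infty}\ \inf_{S}\ \inf_{x^*\in[K^*]}\ \frac1n\sum_{t\in S}\mathbf 1\{X_t=x^*\}\ \ge\ \frac{\delta\sigma_-}{4},$$ where the infimum over $S$ is over all segments $S\subset\{1,\dots,n\}$ with $|S|\ge\delta n$, a segment being a set of the form $[a,b]\cap\mathbb Z$ with $a,b\in\mathbb R$.
   Context: $[K^*]=\{1,\dots,K^*\}$, $K^*\ge1$ an integer; $|S|$ is the cardinality of $S$. *)

theory Defs
  imports "HOL-Probability.Probability"
begin

text \<open>A segment: a set of the form [a,b] \<inter> Z with real a, b (restricted to naturals,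
  which is harmless since we only consider segments contained in {1..n}).\<close>
definition segment :: "nat set \<Rightarrow> bool" where
  "segment S \<longleftrightarrow> (\<exists>a b :: real. S = {t. a \<le> real t \<and> real t \<le> b})"

definition stochastic_matrix :: "nat \<Rightarrow> (nat \<Rightarrow> nat \<Rightarrow> real) \<Rightarrow> bool" where
  "stochastic_matrix K Q \<longleftrightarrow>
     (\<forall>i\<in>{1..K}. \<forall>j\<in>{1..K}. 0 \<le> Q i j) \<and> (\<forall>i\<in>{1..K}. (\<Sum>j=1..K. Q i j) = 1)"

definition markov_chain_on ::
  "'a measure \<Rightarrow> nat \<Rightarrow> (nat \<Rightarrow> nat \<Rightarrow> real) \<Rightarrow> (nat \<Rightarrow> 'a \<Rightarrow> nat) \<Rightarrow> bool" where
  "markov_chain_on M K Q X \<longleftrightarrow>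
     prob_space M \<and>
     (\<forall>t. X t \<in> measurable M (count_space UNIV)) \<and>
     (\<forall>t\<ge>1. \<forall>\<omega>\<in>space M. X t \<omega> \<in> {1..K}) \<and>
     stochastic_matrix K Q \<and>
     (\<forall>n\<ge>1. \<forall>xs :: nat \<Rightarrow> nat.
        measure M {\<omega>\<in>space M. \<forall>t\<in>{1..n+1}. X t \<omega> = xs t}
        = measure M {\<omega>\<in>space M. \<forall>t\<in>{1..n}. X t \<omega> = xs t} * Q (xs n) (xs (n+1)))"

end

theory Submission
  imports Defs
begin

definition cyl :: "'a measure \<Rightarrow> (nat \<Rightarrow> 'a \<Rightarrow> nat) \<Rightarrow> nat \<Rightarrow> (nat \<Rightarrow> nat) \<Rightarrow> 'a set" where
  "cyl M X n xs = {\<omega>\<in>space M. \<forall>t\<in>{1..n}. X t \<omega> = xs t}"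

lemma cyl_sets:
  assumes [measurable]: "\<And>t. X t \<in> measurable M (count_space UNIV)"
  shows "cyl M X n xs \<in> sets M"
  unfolding cyl_def by measurable

lemma cyl_disj: "disjoint_family_on (cyl M X n) (PiE {1..n} T)"
  unfolding disjoint_family_on_def cyl_def
  by auto (metis PiE_ext)

lemma inj_upd: "x \<notin> S \<Longrightarrow> inj_on (\<lambda>(y, g). g(x := y)) (T \<times> PiE S U)"
  unfolding inj_on_def
  by (auto simp: fun_eq_iff PiE_def extensional_def)

lemma core:
  assumes mc: "markov_chain_on M K Q X"
    and low: "\<forall>i\<in>{1..K}. \<forall>j\<in>{1..K}. Q i j \<ge> \<sigma>"
    and x: "x \<in> {1..K}" and sig: "\<sigma> < 1"
    and n: "n \<ge> 1"
  shows "W \<subseteq> {2..n} \<Longrightarrow>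
    (\<Sum>xs\<in>PiE {1..n} (\<lambda>_. {1..K}). (\<Prod>t\<in>W. if xs t = x then 1/2 else 1) * measure M (cyl M X n xs))
      \<le> (1 - \<sigma>/2) ^ card W"
  using n
proof (induction n arbitrary: W rule: nat_induct_at_least)
  case base
  have ps: "prob_space M" and meas: "\<And>t. X t \<in> measurable M (count_space UNIV)"
    using mc unfolding markov_chain_on_def by auto
  interpret prob_space M by (rule ps)
  have W: "W = {}" using base by auto
  have "(\<Sum>xs\<in>PiE {1..1} (\<lambda>_. {1..K}). measure M (cyl M X 1 xs))
        = measure M (\<Union>xs\<in>PiE {1..1} (\<lambda>_. {1..K}). cyl M X 1 xs)"
    by (rule finite_measure_finite_Union[symmetric, OF _ _ cyl_disj])
       (auto intro: finite_PiE cyl_sets meas cyl_disj)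
  also have "\<dots> \<le> 1" by (rule prob_le_1)
  finally show ?case using W by simp
next
  case (Suc n)
  have ps: "prob_space M" and meas: "\<And>t. X t \<in> measurable M (count_space UNIV)"
    and st: "stochastic_matrix K Q"
    and mk: "\<And>n xs. n \<ge> 1 \<Longrightarrow> measure M {\<omega>\<in>space M. \<forall>t\<in>{1..n+1}. X t \<omega> = xs t}
        = measure M {\<omega>\<in>space M. \<forall>t\<in>{1..n}. X t \<omega> = xs t} * Q (xs n) (xs (n+1))"
    using mc unfolding markov_chain_on_def by auto
  define w where "w = (\<lambda>y::nat. if y = x then 1/2 else (1::real))"
  define W' where "W' = W - {Suc n}"
  define c where "c = (\<lambda>j. if Suc n \<in> W then w j else 1)"
  define bnd where "bnd = (if Suc n \<in> W then 1 - \<sigma>/2 else (1::real))"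
  define P where "P = PiE {1..n} (\<lambda>_::nat. {1..K::nat})"
  have W': "W' \<subseteq> {2..n}" using Suc.prems unfolding W'_def by auto
  have cardW: "(1 - \<sigma>/2) ^ card W = bnd * (1 - \<sigma>/2) ^ card W'"
  proof (cases "Suc n \<in> W")
    case True
    then have "W = insert (Suc n) W'" "Suc n \<notin> W'" "finite W'" unfolding W'_def
      using W' Suc.prems finite_subset[of W "{2..Suc n}"] by auto
    then show ?thesis using True unfolding bnd_def by (simp add: card_insert_if)
  next
    case False then show ?thesis unfolding bnd_def W'_def by simp
  qed
  have ins: "{1..Suc n} = insert (Suc n) {1..n}" by auto
  have prodeq: "(\<Prod>t\<in>W. w ((g(Suc n := j)) t)) = (\<Prod>t\<in>W'. w (g t)) * c j" for g j
  proof (cases "Suc n \<in> W")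
    case True
    then have "W = insert (Suc n) W'" "Suc n \<notin> W'" "finite W'" unfolding W'_def
      using W' Suc.prems finite_subset[of W "{2..Suc n}"] by auto
    then show ?thesis using True unfolding c_def
      by (simp add: mult.commute) (rule disjI2, rule prod.cong, auto)
  next
    case False then show ?thesis unfolding c_def W'_def
      by simp (intro prod.cong, auto)
  qed
  have cyleq: "measure M (cyl M X (Suc n) (g(Suc n := j))) = measure M (cyl M X n g) * Q (g n) j" for g j
  proof -
    have "measure M (cyl M X (Suc n) (g(Suc n := j))) =
        measure M (cyl M X n (g(Suc n := j))) * Q ((g(Suc n := j)) n) ((g(Suc n := j)) (n+1))"
      using mk[of n "g(Suc n := j)"] Suc.hyps unfolding cyl_def by simp
    moreover have "cyl M X n (g(Suc n := j)) = cyl M X n g" unfolding cyl_def by auto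
    ultimately show ?thesis by simp
  qed
  have inner: "(\<Sum>j\<in>{1..K}. c j * Q i j) \<le> bnd" if i: "i \<in> {1..K}" for i
  proof (cases "Suc n \<in> W")
    case False
    then show ?thesis using st i unfolding c_def bnd_def stochastic_matrix_def by simp
  next
    case True
    have "(\<Sum>j\<in>{1..K}. c j * Q i j) = (\<Sum>j\<in>{1..K}. Q i j - (if j = x then Q i x / 2 else 0))"
      using True unfolding c_def w_def by (intro sum.cong) auto
    also have "\<dots> = 1 - Q i x / 2"
      using st i x unfolding stochastic_matrix_def by (simp add: sum_subtractf)
    also have "\<dots> \<le> bnd" using True low i x unfolding bnd_def by auto
    finally show ?thesis .
  qed
  have "(\<Sum>xs\<in>PiE {1..Suc n} (\<lambda>_. {1..K}). (\<Prod>t\<in>W. w (xs t)) * measure M (cyl M X (Suc n) xs))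
      = (\<Sum>(j,g)\<in>{1..K} \<times> P. (\<Prod>t\<in>W. w ((g(Suc n := j)) t)) * measure M (cyl M X (Suc n) (g(Suc n := j))))"
    unfolding ins PiE_insert_eq P_def
    by (subst sum.reindex[OF inj_upd]) (auto simp: case_prod_unfold)
  also have "\<dots> = (\<Sum>j\<in>{1..K}. \<Sum>g\<in>P. (\<Prod>t\<in>W'. w (g t)) * measure M (cyl M X n g) * (c j * Q (g n) j))"
    by (subst sum.cartesian_product[symmetric]) (simp only: prodeq cyleq, simp add: mult_ac)
  also have "\<dots> = (\<Sum>g\<in>P. (\<Prod>t\<in>W'. w (g t)) * measure M (cyl M X n g) * (\<Sum>j\<in>{1..K}. c j * Q (g n) j))"
    by (subst sum.swap) (simp add: sum_distrib_left)
  also have "\<dots> \<le> (\<Sum>g\<in>P. (\<Prod>t\<in>W'. w (g t)) * measure M (cyl M X n g) * bnd)"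
  proof (intro sum_mono mult_left_mono)
    fix g assume "g \<in> P"
    then have "g n \<in> {1..K}" using Suc.hyps unfolding P_def by auto
    then show "(\<Sum>j\<in>{1..K}. c j * Q (g n) j) \<le> bnd" by (rule inner)
    show "0 \<le> (\<Prod>t\<in>W'. w (g t)) * measure M (cyl M X n g)"
      unfolding w_def by (intro mult_nonneg_nonneg prod_nonneg) auto
  qed
  also have "\<dots> = bnd * (\<Sum>g\<in>P. (\<Prod>t\<in>W'. w (g t)) * measure M (cyl M X n g))"
    by (simp add: sum_distrib_left mult_ac)
  also have "\<dots> \<le> bnd * (1 - \<sigma>/2) ^ card W'"
  proof (rule mult_left_mono)
    show "(\<Sum>g\<in>P. (\<Prod>t\<in>W'. w (g t)) * measure M (cyl M X n g)) \<le> (1 - \<sigma>/2) ^ card W'"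
      using Suc.IH[OF W'] unfolding P_def w_def .
    show "0 \<le> bnd" unfolding bnd_def using sig by auto
  qed
  finally show ?case using cardW unfolding w_def by simp
qed

lemma tail:
  assumes mc: "markov_chain_on M K Q X"
    and low: "\<forall>i\<in>{1..K}. \<forall>j\<in>{1..K}. Q i j \<ge> \<sigma>"
    and x: "x \<in> {1..K}" and sig: "\<sigma> < 1"
    and n: "n \<ge> 1" and W: "W \<subseteq> {2..n}"
  shows "measure M {\<omega>\<in>space M. real (card {t\<in>W. X t \<omega> = x}) \<le> m}
      \<le> 2 powr m * (1 - \<sigma>/2) ^ card W"
proof -
  have ps: "prob_space M" and meas: "\<And>t. X t \<in> measurable M (count_space UNIV)"
    and rng: "\<And>t \<omega>. t \<ge> 1 \<Longrightarrow> \<omega> \<in> space M \<Longrightarrow> X t \<omega> \<in> {1..K}"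
    using mc unfolding markov_chain_on_def by auto
  interpret prob_space M by (rule ps)
  define P where "P = PiE {1..n} (\<lambda>_::nat. {1..K::nat})"
  define cnt where "cnt = (\<lambda>xs::nat\<Rightarrow>nat. card {t\<in>W. xs t = x})"
  define F where "F = {xs\<in>P. real (cnt xs) \<le> m}"
  define g where "g = (\<lambda>xs::nat\<Rightarrow>nat. \<Prod>t\<in>W. if xs t = x then 1/2 else (1::real))"
  have finW: "finite W" using W finite_subset by blast
  have finP: "finite P" unfolding P_def by (rule finite_PiE) auto
  have "{\<omega>\<in>space M. real (card {t\<in>W. X t \<omega> = x}) \<le> m} \<subseteq> (\<Union>xs\<in>F. cyl M X n xs)"
  proof
    fix \<omega> assume \<omega>: "\<omega> \<in> {\<omega>\<in>space M. real (card {t\<in>W. X t \<omega> = x}) \<le> m}"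
    define xs where "xs = restrict (\<lambda>t. X t \<omega>) {1..n}"
    have "xs \<in> P" unfolding xs_def P_def using rng \<omega> by auto
    moreover have "cnt xs = card {t\<in>W. X t \<omega> = x}"
      unfolding cnt_def xs_def using W by (intro arg_cong[where f=card]) auto
    moreover have "\<omega> \<in> cyl M X n xs" unfolding cyl_def xs_def using \<omega> by auto
    ultimately show "\<omega> \<in> (\<Union>xs\<in>F. cyl M X n xs)" unfolding F_def using \<omega> by auto
  qed
  then have "measure M {\<omega>\<in>space M. real (card {t\<in>W. X t \<omega> = x}) \<le> m}
      \<le> measure M (\<Union>xs\<in>F. cyl M X n xs)"
    by (intro finite_measure_mono sets.finite_UN) (auto simp: F_def finP cyl_sets meas)
  also have "\<dots> \<le> (\<Sum>xs\<in>F. measure M (cyl M X n xs))"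
    by (intro finite_measure_subadditive_finite) (auto simp: F_def finP cyl_sets meas)
  also have "\<dots> \<le> (\<Sum>xs\<in>F. 2 powr m * (g xs * measure M (cyl M X n xs)))"
  proof (intro sum_mono)
    fix xs assume xs: "xs \<in> F"
    have "g xs = (1/2) ^ cnt xs"
      unfolding g_def cnt_def using finW
      by (simp add: prod.If_cases Int_def conj_commute)
    also have "\<dots> = 2 powr (- real (cnt xs))"
      by (simp add: powr_minus powr_realpow power_one_over inverse_eq_divide)
    finally have "2 powr m * g xs = 2 powr (m - real (cnt xs))"
      by (simp add: powr_diff powr_minus divide_inverse)
    also have "\<dots> \<ge> 1" using xs unfolding F_def by (intro ge_one_powr_ge_zero) auto
    finally have "1 \<le> 2 powr m * g xs" .
    then show "measure M (cyl M X n xs) \<le> 2 powr m * (g xs * measure M (cyl M X n xs))"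
      using mult_right_mono[of 1 "2 powr m * g xs" "measure M (cyl M X n xs)"]
      by (simp add: mult_ac)
  qed
  also have "\<dots> \<le> (\<Sum>xs\<in>P. 2 powr m * (g xs * measure M (cyl M X n xs)))"
    by (intro sum_mono2 finP) (auto simp: F_def g_def intro!: prod_nonneg mult_nonneg_nonneg)
  also have "\<dots> = 2 powr m * (\<Sum>xs\<in>P. g xs * measure M (cyl M X n xs))"
    by (simp add: sum_distrib_left)
  also have "\<dots> \<le> 2 powr m * (1 - \<sigma>/2) ^ card W"
    using core[OF mc low x sig n W] unfolding P_def g_def
    by (intro mult_left_mono) auto
  finally show ?thesis .
qed


lemma summ_aux:
  fixes c :: real assumes c: "c > 0"
  shows "summable (\<lambda>n. real n ^ 2 * exp (- c * real n))"
proof (rule summable_comparison_test')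
  have "summable (\<lambda>n. exp (- (c/2)) ^ n)" using c by (intro summable_geometric) auto
  then show "summable (\<lambda>n. 8 / c^2 * exp (- (c/2)) ^ n)" by (rule summable_mult)
  fix n :: nat
  define y where "y = c * real n / 2"
  have y: "y \<ge> 0" using c unfolding y_def by simp
  have "y^2 / 2 \<le> exp y" using exp_lower_Taylor_quadratic[OF y] y by linarith
  then have "real n ^ 2 * c^2 / 8 \<le> exp (c * real n / 2)" unfolding y_def by (simp add: power_mult_distrib field_simps)
  then have "real n ^ 2 \<le> 8 / c^2 * exp (c * real n / 2)" using c by (simp add: field_simps)
  then have "real n ^ 2 * exp (- c * real n) \<le> 8 / c^2 * exp (c * real n / 2) * exp (- c * real n)"
    by (intro mult_right_mono) auto
  also have "\<dots> = 8 / c^2 * exp (- (c/2)) ^ n"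
    by (simp add: exp_of_nat_mult[symmetric] mult_ac exp_add[symmetric])
  finally show "norm (real n ^ 2 * exp (- c * real n)) \<le> 8 / c^2 * exp (- (c/2)) ^ n" by simp
qed

lemma Bbound:
  fixes \<sigma> \<delta> :: real
  assumes mc: "markov_chain_on M K Q X"
    and low: "\<forall>i\<in>{1..K}. \<forall>j\<in>{1..K}. Q i j \<ge> \<sigma>"
    and x: "x \<in> {1..K}" and sig0: "0 < \<sigma>" and sig: "\<sigma> < 1" and dl: "\<delta> > 0"
    and a: "a \<in> {1..n}" and b: "b \<in> {1..n}" and len: "\<delta> * real n \<le> real (Suc b - a)"
  shows "measure M {\<omega>\<in>space M. real (card {t\<in>{max 2 a..b}. X t \<omega> = x}) \<le> \<delta> * \<sigma> * real n / 4}
     \<le> exp (- (\<delta> * \<sigma> / 4) * real n) / (1 - \<sigma>/2)"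
proof -
  define r where "r = 1 - \<sigma>/2"
  define c where "c = card {max 2 a..b}"
  have r: "0 < r" "r < 1" using sig0 sig unfolding r_def by auto
  have n: "n \<ge> 1" using a by auto
  have "Suc b - a \<le> Suc b - max 2 a + 1" using a by auto
  then have "real (Suc b - a) \<le> real (Suc b - max 2 a) + 1" by linarith
  then have cge: "real c \<ge> \<delta> * real n - 1" using len unfolding c_def by auto
  have lnr: "ln r \<le> - \<sigma>/2" using ln_le_minus_one[OF r(1)] unfolding r_def by simp
  have lnr0: "ln r \<le> 0" using r by simp
  have "measure M {\<omega>\<in>space M. real (card {t\<in>{max 2 a..b}. X t \<omega> = x}) \<le> \<delta> * \<sigma> * real n / 4}
      \<le> 2 powr (\<delta> * \<sigma> * real n / 4) * r ^ c"
    unfolding r_def c_def using b n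
    by (intro tail[OF mc low x sig n]) auto
  also have "2 powr (\<delta> * \<sigma> * real n / 4) \<le> exp (\<delta> * \<sigma> * real n / 4)"
  proof -
    have "2 powr (\<delta> * \<sigma> * real n / 4) = exp (ln 2 * (\<delta> * \<sigma> * real n / 4))"
      by (simp add: powr_def)
    also have "\<dots> \<le> exp (\<delta> * \<sigma> * real n / 4)"
      using mult_right_mono[of "ln 2" 1 "\<delta> * \<sigma> * real n / 4"] ln_2_less_1 sig0 dl
      by (intro exp_mono) simp
    finally show ?thesis .
  qed
  then have "2 powr (\<delta> * \<sigma> * real n / 4) * r ^ c \<le> exp (\<delta> * \<sigma> * real n / 4) * r ^ c"
    using r by (intro mult_right_mono) auto
  also have "r ^ c \<le> exp (- (\<delta> * \<sigma> / 2) * real n) / r"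
  proof -
    have "r ^ c = exp (real c * ln r)" using r by (simp add: powr_realpow[symmetric] powr_def)
    also have "\<dots> \<le> exp ((\<delta> * real n - 1) * ln r)"
      using cge lnr0 by (intro exp_mono mult_right_mono_neg) auto
    also have "\<dots> = exp (\<delta> * real n * ln r) / r"
      using r by (simp add: left_diff_distrib exp_diff)
    also have "\<dots> \<le> exp (- (\<delta> * \<sigma> / 2) * real n) / r"
    proof -
      have "\<delta> * real n * ln r \<le> \<delta> * real n * (- \<sigma>/2)"
        using lnr dl by (intro mult_left_mono) auto
      then show ?thesis using r by (intro divide_right_mono) (auto simp: mult_ac)
    qed
    finally show ?thesis .
  qed
  then have "exp (\<delta> * \<sigma> * real n / 4) * r ^ c \<le> exp (\<delta> * \<sigma> * real n / 4) * (exp (- (\<delta> * \<sigma> / 2) * real n) / r)"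
    by (intro mult_left_mono) auto
  also have "\<dots> = exp (- (\<delta> * \<sigma> / 4) * real n) / r"
    by (simp add: exp_add[symmetric] field_simps)
  finally show ?thesis unfolding r_def .
qed

theorem lemma13:
  fixes M :: "'a measure" and K :: nat and Q :: "nat \<Rightarrow> nat \<Rightarrow> real"
    and X :: "nat \<Rightarrow> 'a \<Rightarrow> nat" and \<sigma> \<delta> :: real
  assumes "K \<ge> 1"
    and "markov_chain_on M K Q X"
    and "0 < \<sigma>" and "\<sigma> < 1"
    and "\<forall>i\<in>{1..K}. \<forall>j\<in>{1..K}. Q i j \<ge> \<sigma>"
    and "\<delta> > 0"
  shows "AE \<omega> in M.
           liminf (\<lambda>n. INF S\<in>{S. segment S \<and> S \<subseteq> {1..n} \<and> real (card S) \<ge> \<delta> * real n}.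
                         INF x\<in>{1..K}. ereal (real (card {t\<in>S. X t \<omega> = x}) / real n))
           \<ge> ereal (\<delta> * \<sigma> / 4)"
proof -
  note mc = assms(2) and sig0 = assms(3) and sig = assms(4) and low = assms(5) and dl = assms(6)
  have ps: "prob_space M" and meas[measurable]: "\<And>t. X t \<in> measurable M (count_space UNIV)"
    using mc unfolding markov_chain_on_def by auto
  interpret prob_space M by (rule ps)
  define I where "I = (\<lambda>n::nat. {(a,b,x). a\<in>{1..n} \<and> b\<in>{1..n} \<and> x\<in>{1..K} \<and> \<delta> * real n \<le> real (Suc b - a)})"
  define B where "B = (\<lambda>n::nat. \<lambda>(a::nat,b::nat,x::nat). {\<omega>\<in>space M. real (card {t\<in>{max 2 a..b}. X t \<omega> = x}) \<le> \<delta> * \<sigma> * real n / 4})"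
  define A where "A = (\<lambda>n. \<Union>p\<in>I n. B n p)"
  have Isub: "I n \<subseteq> {1..n} \<times> {1..n} \<times> {1..K}" for n unfolding I_def by auto
  have finI: "finite (I n)" for n by (rule finite_subset[OF Isub]) auto
  have cardI: "card (I n) \<le> n * n * K" for n
    using card_mono[OF _ Isub[of n]] by (simp add: card_cartesian_product)
  have Bsets: "B n p \<in> sets M" for n p
    unfolding B_def by (cases p) (simp, measurable)
  have Asets: "A n \<in> sets M" for n unfolding A_def using finI Bsets by auto
  define r where "r = 1 - \<sigma>/2"
  have r: "0 < r" using sig unfolding r_def by auto
  have Abnd: "measure M (A n) \<le> real K / r * (real n ^ 2 * exp (- (\<delta> * \<sigma> / 4) * real n))" for n
  proof -
    have "measure M (A n) \<le> (\<Sum>p\<in>I n. measure M (B n p))"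
      unfolding A_def using finI Bsets by (intro finite_measure_subadditive_finite) auto
    also have "\<dots> \<le> (\<Sum>p\<in>I n. exp (- (\<delta> * \<sigma> / 4) * real n) / r)"
    proof (intro sum_mono)
      fix p assume "p \<in> I n"
      then obtain a b x where p: "p = (a,b,x)" "a\<in>{1..n}" "b\<in>{1..n}" "x\<in>{1..K}" "\<delta> * real n \<le> real (Suc b - a)"
        unfolding I_def by auto
      show "measure M (B n p) \<le> exp (- (\<delta> * \<sigma> / 4) * real n) / r"
        unfolding p(1) B_def r_def using Bbound[OF mc low p(4) sig0 sig dl p(2) p(3) p(5)] by simp
    qed
    also have "\<dots> = real (card (I n)) * (exp (- (\<delta> * \<sigma> / 4) * real n) / r)" by simp
    also have "\<dots> \<le> real (n * n * K) * (exp (- (\<delta> * \<sigma> / 4) * real n) / r)"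
      using cardI[of n] r by (intro mult_right_mono) (simp only: of_nat_le_iff, simp)
    also have "\<dots> = real K / r * (real n ^ 2 * exp (- (\<delta> * \<sigma> / 4) * real n))"
      by (simp add: power2_eq_square)
    finally show ?thesis .
  qed
  have summ: "summable (\<lambda>n. measure M (A n))"
  proof (rule summable_comparison_test')
    show "summable (\<lambda>n. real K / r * (real n ^ 2 * exp (- (\<delta> * \<sigma> / 4) * real n)))"
      using summ_aux[of "\<delta> * \<sigma> / 4"] dl sig0 by (intro summable_mult) auto
    show "norm (measure M (A n)) \<le> real K / r * (real n ^ 2 * exp (- (\<delta> * \<sigma> / 4) * real n))" for n
      using Abnd[of n] by simp
  qed
  have bc: "AE \<omega> in M. eventually (\<lambda>n. \<omega> \<in> space M - A n) sequentially"
    by (rule borel_cantelli_AE1[OF Asets]) (auto simp: emeasure_eq_measure summ)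
  show ?thesis
  proof (rule eventually_mono[OF bc])
    fix \<omega> assume ev: "eventually (\<lambda>n. \<omega> \<in> space M - A n) sequentially"
    show "liminf (\<lambda>n. INF S\<in>{S. segment S \<and> S \<subseteq> {1..n} \<and> real (card S) \<ge> \<delta> * real n}.
                         INF x\<in>{1..K}. ereal (real (card {t\<in>S. X t \<omega> = x}) / real n))
           \<ge> ereal (\<delta> * \<sigma> / 4)"
    proof (rule Liminf_bounded)
      show "\<forall>\<^sub>F n in sequentially. ereal (\<delta> * \<sigma> / 4) \<le> (INF S\<in>{S. segment S \<and> S \<subseteq> {1..n} \<and> real (card S) \<ge> \<delta> * real n}.
                         INF x\<in>{1..K}. ereal (real (card {t\<in>S. X t \<omega> = x}) / real n))"
        using ev eventually_ge_at_top[of "1::nat"]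
      proof (eventually_elim)
        case (elim n)
        then have \<omega>: "\<omega> \<in> space M" "\<omega> \<notin> A n" and n: "n \<ge> 1" by auto
        show ?case
        proof (intro INF_greatest)
          fix S x assume S: "S \<in> {S. segment S \<and> S \<subseteq> {1..n} \<and> real (card S) \<ge> \<delta> * real n}"
            and x: "x \<in> {1..K}"
          have finS: "finite S" using S finite_subset by auto
          have "0 < \<delta> * real n" using dl n by simp
          then have "real (card S) > 0" using S by simp
          then have Sne: "S \<noteq> {}" by auto
          define a where "a = Min S"
          define b where "b = Max S"
          have aS: "a \<in> S" and bS: "b \<in> S" unfolding a_def b_def using finS Sne by auto
          obtain \<alpha> \<beta> :: real where seg: "S = {t. \<alpha> \<le> real t \<and> real t \<le> \<beta>}"
            using S unfolding segment_def by auto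
          have Sab: "S = {a..b}"
          proof
            show "S \<subseteq> {a..b}" unfolding a_def b_def using finS by auto
            show "{a..b} \<subseteq> S"
            proof
              fix t assume "t \<in> {a..b}"
              moreover have "\<alpha> \<le> real a" "real b \<le> \<beta>" using aS bS seg by auto
              ultimately show "t \<in> S" using seg by auto
            qed
          qed
          have ab: "a \<in> {1..n}" "b \<in> {1..n}" using aS bS S by auto
          have "\<delta> * real n \<le> real (Suc b - a)" using S Sab by simp
          then have "(a,b,x) \<in> I n" unfolding I_def using ab x by auto
          then have "\<omega> \<notin> B n (a,b,x)" using \<omega> unfolding A_def by auto
          then have lt: "\<delta> * \<sigma> * real n / 4 < real (card {t\<in>{max 2 a..b}. X t \<omega> = x})"
            using \<omega> unfolding B_def by auto
          have "card {t\<in>{max 2 a..b}. X t \<omega> = x} \<le> card {t\<in>S. X t \<omega> = x}"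
            using finS unfolding Sab by (intro card_mono) auto
          then have "\<delta> * \<sigma> * real n / 4 \<le> real (card {t\<in>S. X t \<omega> = x})" using lt by linarith
          then have "\<delta> * \<sigma> / 4 \<le> real (card {t\<in>S. X t \<omega> = x}) / real n"
            using n by (simp add: pos_le_divide_eq mult_ac)
          then show "ereal (\<delta> * \<sigma> / 4) \<le> ereal (real (card {t\<in>S. X t \<omega> = x}) / real n)"
            by simp
        qed
      qed
    qed
  qed
qed

end
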